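(* Let $\mathcal C=(\Lambda+\mathbf t)\cap\triangle_n^{q-1}$ be a linear multiset code with $d_1(\mathcal C)>h$, where $\Lambda\subseteq A_{q-1}$ is a lattice and $\mathbf t\in\mathbb Z^q$ satisfies $\sum_i t_i=n$ and $t_i\ge h$ for all $i\in[q]$. Then there exist an Abelian group $G$, a $B_h$ set $B=\{b_0,\dots,b_{q-1}\}\subseteq G$ and $b\in G$ such that $\mathcal C=\{\mathbf x\in\triangle_n^{q-1}:\sum_{i=0}^{q-1}x_ib_i=b\}$.
   Context: $[q]=\{0,\dots,q-1\}$; $\triangle_n^{q-1}=\{\mathbf x\in\mathbb Z^q:x_i\ge0,\sum_ix_i=n\}$; $A_{q-1}=\{\mathbf x\in\mathbb Z^q:\sum_ix_i=0\}$; a lattice is a subgroup of $(\mathbb Z^q,+)$. A multiset code is a subset of $\triangle_n^{q-1}$ with at least two elements; it is linear if it equals $(\Lambda+\mathbf t)\cap\triangle_n^{q-1}$ for some lattice $\Lambda\subseteq A_{q-1}$ and $\mathbf t\in\mathbb Z^q$ with $\sum_it_i=n$. $d_1(\mathbf x,\mathbf y)=\frac12\sum_i|x_i-y_i|$, $d_1(\mathcal C)$ the minimum distance. A set $\{b_0,\dots,b_{q-1}\}$ in an Abelian group is a $B_h$ set if the sums $b_{i_1}+\dots+b_{i_h}$, $0\le i_1\le\dots\le i_h\le q-1$, are pairwise different; $x_ib_i$ denotes the $x_i$-fold sum in $G$ (with $-b_i$ for negative $x_i$). *)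

theory Defs
  imports "HOL-Algebra.Algebra"
begin

text \<open>Vectors in Z^q are functions from a finite index type 'q (playing the role of [q])
  to int.\<close>

definition simplex :: "nat \<Rightarrow> ('q::finite \<Rightarrow> int) set" where
  "simplex n = {x. (\<forall>i. x i \<ge> 0) \<and> (\<Sum>i\<in>UNIV. x i) = int n}"

definition A_root :: "('q::finite \<Rightarrow> int) set" where
  "A_root = {x. (\<Sum>i\<in>UNIV. x i) = 0}"

definition is_lattice :: "('q \<Rightarrow> int) set \<Rightarrow> bool" where
  "is_lattice L \<longleftrightarrow> (\<lambda>_. 0) \<in> L \<and> (\<forall>x\<in>L. \<forall>y\<in>L. (\<lambda>i. x i + y i) \<in> L)
     \<and> (\<forall>x\<in>L. (\<lambda>i. - x i) \<in> L)"

definition coset :: "('q \<Rightarrow> int) set \<Rightarrow> ('q \<Rightarrow> int) \<Rightarrow> ('q \<Rightarrow> int) set" where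
  "coset L t = {(\<lambda>i. x i + t i) | x. x \<in> L}"

definition multiset_code :: "nat \<Rightarrow> ('q::finite \<Rightarrow> int) set \<Rightarrow> bool" where
  "multiset_code n C \<longleftrightarrow> C \<subseteq> simplex n \<and> card C \<ge> 2"

definition d1 :: "('q::finite \<Rightarrow> int) \<Rightarrow> ('q \<Rightarrow> int) \<Rightarrow> real" where
  "d1 x y = (1/2) * (\<Sum>i\<in>UNIV. real_of_int \<bar>x i - y i\<bar>)"

definition min_dist :: "('q::finite \<Rightarrow> int) set \<Rightarrow> real" where
  "min_dist C = Min {d1 x y | x y. x \<in> C \<and> y \<in> C \<and> x \<noteq> y}"

text \<open>B_h property of the indexed family b_0,...,b_{q-1} in an abelian group G (written
  multiplicatively, as in HOL-Algebra): a nondecreasing index tuple i_1 \<le> ... \<le> i_h is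
  encoded by its multiplicity function m :: 'q \<Rightarrow> nat with sum h, and the sum
  b_{i_1}+...+b_{i_h} is the product of the b_i^(m i).\<close>

definition Bh_set :: "('g, 'c) monoid_scheme \<Rightarrow> nat \<Rightarrow> ('q::finite \<Rightarrow> 'g) \<Rightarrow> bool" where
  "Bh_set G h b \<longleftrightarrow> (\<forall>i. b i \<in> carrier G) \<and>
     (\<forall>m m' :: 'q \<Rightarrow> nat. (\<Sum>i\<in>UNIV. m i) = h \<longrightarrow> (\<Sum>i\<in>UNIV. m' i) = h \<longrightarrow>
        finprod G (\<lambda>i. b i [^]\<^bsub>G\<^esub> m i) UNIV = finprod G (\<lambda>i. b i [^]\<^bsub>G\<^esub> m' i) UNIV
        \<longrightarrow> m = m')"

end

theory Submission
  imports Defs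
begin

definition QG :: "('q \<Rightarrow> int) set \<Rightarrow> ('q \<Rightarrow> int) set monoid" where
  "QG L = \<lparr>carrier = range (coset L),
           monoid.mult = (\<lambda>A B. {(\<lambda>i. a i + b i) | a b. a \<in> A \<and> b \<in> B}), monoid.one = L\<rparr>"

lemma lat_add: "is_lattice L \<Longrightarrow> x \<in> L \<Longrightarrow> y \<in> L \<Longrightarrow> (\<lambda>i. x i + y i) \<in> L"
  unfolding is_lattice_def by blast

lemma lat_neg: "is_lattice L \<Longrightarrow> x \<in> L \<Longrightarrow> (\<lambda>i. - x i) \<in> L"
  unfolding is_lattice_def by blast

lemma lat_diff: assumes "is_lattice L" "x \<in> L" "y \<in> L" shows "(\<lambda>i. x i - y i) \<in> L"
proof -
  have "(\<lambda>i. x i + (\<lambda>i. - y i) i) \<in> L"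
    by (rule lat_add[OF assms(1) assms(2) lat_neg[OF assms(1) assms(3)]])
  then show ?thesis by simp
qed

lemma lat_0: "is_lattice L \<Longrightarrow> (\<lambda>_. 0) \<in> L"
  unfolding is_lattice_def by blast

lemma coset_mem1: assumes "is_lattice L" shows "y \<in> coset L x \<Longrightarrow> (\<lambda>i. y i - x i) \<in> L"
proof -
  assume "y \<in> coset L x"
  then obtain z where z: "z \<in> L" "y = (\<lambda>i. z i + x i)" unfolding coset_def by blast
  have "(\<lambda>i. y i - x i) = z" using z(2) by (simp add: fun_eq_iff)
  then show "(\<lambda>i. y i - x i) \<in> L" using z(1) by (simp only:)
qed
lemma coset_mem2: assumes "is_lattice L" shows "(\<lambda>i. y i - x i) \<in> L \<Longrightarrow> y \<in> coset L x"
proof -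
  assume h: "(\<lambda>i. y i - x i) \<in> L"
  show "y \<in> coset L x" unfolding coset_def mem_Collect_eq
    by (rule exI[of _ "\<lambda>i. y i - x i"]) (simp add: h fun_eq_iff)
qed
lemma coset_mem: assumes "is_lattice L" shows "y \<in> coset L x \<longleftrightarrow> (\<lambda>i. y i - x i) \<in> L"
  using coset_mem1[OF assms] coset_mem2[OF assms] by blast

lemma coset_eq: assumes "is_lattice L"
  shows "coset L x = coset L y \<longleftrightarrow> (\<lambda>i. x i - y i) \<in> L"
proof
  assume "coset L x = coset L y"
  moreover have "x \<in> coset L x" using coset_mem[OF assms] lat_0[OF assms] by simp
  ultimately show "(\<lambda>i. x i - y i) \<in> L" using coset_mem[OF assms] by blast
next
  assume d: "(\<lambda>i. x i - y i) \<in> L"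
  show "coset L x = coset L y"
  proof (rule Set.set_eqI)
    fix z
    have "(\<lambda>i. z i - x i) \<in> L \<longleftrightarrow> (\<lambda>i. z i - y i) \<in> L"
    proof
      assume "(\<lambda>i. z i - x i) \<in> L"
      from lat_add[OF assms this d] show "(\<lambda>i. z i - y i) \<in> L" by simp
    next
      assume "(\<lambda>i. z i - y i) \<in> L"
      from lat_diff[OF assms this d] show "(\<lambda>i. z i - x i) \<in> L" by simp
    qed
    then show "z \<in> coset L x \<longleftrightarrow> z \<in> coset L y" using coset_mem[OF assms] by blast
  qed
qed

lemma coset_0: "is_lattice L \<Longrightarrow> coset L (\<lambda>_. 0) = L"
  unfolding coset_def by auto

lemma mult_coset: assumes "is_lattice L"
  shows "coset L x \<otimes>\<^bsub>QG L\<^esub> coset L y = coset L (\<lambda>i. x i + y i)"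
proof (rule Set.set_eqI)
  fix z
  show "z \<in> coset L x \<otimes>\<^bsub>QG L\<^esub> coset L y \<longleftrightarrow> z \<in> coset L (\<lambda>i. x i + y i)"
  proof
    assume "z \<in> coset L x \<otimes>\<^bsub>QG L\<^esub> coset L y"
    then obtain a b where z: "z = (\<lambda>i. a i + b i)" and ab: "a \<in> coset L x" "b \<in> coset L y"
      by (auto simp: QG_def)
    then have "(\<lambda>i. a i - x i) \<in> L" "(\<lambda>i. b i - y i) \<in> L" using coset_mem[OF assms] by auto
    from lat_add[OF assms this] have "(\<lambda>i. z i - (x i + y i)) \<in> L"
      by (simp add: z algebra_simps)
    then show "z \<in> coset L (\<lambda>i. x i + y i)" using coset_mem[OF assms] by simp
  next
    assume "z \<in> coset L (\<lambda>i. x i + y i)"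
    then have "(\<lambda>i. z i - y i) \<in> coset L x" using coset_mem[OF assms] by (simp add: algebra_simps)
    moreover have "y \<in> coset L y" using coset_mem[OF assms] lat_0[OF assms] by simp
    ultimately show "z \<in> coset L x \<otimes>\<^bsub>QG L\<^esub> coset L y"
    proof -
      assume a1: "(\<lambda>i. z i - y i) \<in> coset L x" and a2: "y \<in> coset L y"
      have "z = (\<lambda>i. (\<lambda>i. z i - y i) i + y i)" by (simp add: fun_eq_iff)
      then have "\<exists>a b. z = (\<lambda>i. a i + b i) \<and> a \<in> coset L x \<and> b \<in> coset L y"
        using a1 a2 by (intro exI[of _ "\<lambda>i. z i - y i"] exI[of _ y]) simp
      then show ?thesis by (simp add: QG_def)
    qed
  qed
qed

lemma QG_carrier: "carrier (QG L) = range (coset L)" by (simp add: QG_def)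
lemma QG_one: "one (QG L) = L" by (simp add: QG_def)

lemma QG_group: assumes "is_lattice L" shows "comm_group (QG L)"
proof (rule comm_groupI)
  fix x y z assume "x \<in> carrier (QG L)" "y \<in> carrier (QG L)" "z \<in> carrier (QG L)"
  then obtain a b c where x: "x = coset L a" and y: "y = coset L b" and z: "z = coset L c"
    by (auto simp: QG_carrier)
  show "x \<otimes>\<^bsub>QG L\<^esub> y \<in> carrier (QG L)" by (simp add: x y mult_coset[OF assms] QG_carrier)
  show "x \<otimes>\<^bsub>QG L\<^esub> y \<otimes>\<^bsub>QG L\<^esub> z = x \<otimes>\<^bsub>QG L\<^esub> (y \<otimes>\<^bsub>QG L\<^esub> z)"
    by (simp add: x y z mult_coset[OF assms] add.assoc)
  show "x \<otimes>\<^bsub>QG L\<^esub> y = y \<otimes>\<^bsub>QG L\<^esub> x"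
    by (simp add: x y mult_coset[OF assms] add.commute)
  show "\<one>\<^bsub>QG L\<^esub> \<otimes>\<^bsub>QG L\<^esub> x = x"
    using mult_coset[OF assms, of "\<lambda>_. 0" a] by (simp add: x QG_one coset_0[OF assms])
  show "\<exists>y\<in>carrier (QG L). y \<otimes>\<^bsub>QG L\<^esub> x = \<one>\<^bsub>QG L\<^esub>"
    using mult_coset[OF assms, of "\<lambda>i. - a i" a]
    by (intro bexI[of _ "coset L (\<lambda>i. - a i)"]) (simp_all add: x QG_one coset_0[OF assms] QG_carrier)
next
  show "\<one>\<^bsub>QG L\<^esub> \<in> carrier (QG L)"
    using coset_0[OF assms] by (simp add: QG_one QG_carrier) (metis rangeI)
qed

lemma finprod_coset:
  assumes L: "is_lattice L" and F: "finite F"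
  shows "finprod (QG L) (\<lambda>i. coset L (f i)) F = coset L (\<lambda>j. \<Sum>i\<in>F. f i j)"
  using F
proof (induction F rule: finite_induct)
  case empty
  interpret comm_group "QG L" by (rule QG_group[OF L])
  show ?case by (simp add: QG_one coset_0[OF L])
next
  case (insert a F)
  interpret comm_group "QG L" by (rule QG_group[OF L])
  have cl: "(\<lambda>i. coset L (f i)) \<in> F \<rightarrow> carrier (QG L)" by (auto simp: QG_carrier)
  have "finprod (QG L) (\<lambda>i. coset L (f i)) (insert a F)
        = coset L (f a) \<otimes>\<^bsub>QG L\<^esub> finprod (QG L) (\<lambda>i. coset L (f i)) F"
    using insert cl by (simp add: QG_carrier)
  also have "\<dots> = coset L (\<lambda>j. f a j + (\<Sum>i\<in>F. f i j))"
    by (simp add: insert.IH mult_coset[OF L])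
  finally show ?case using insert by simp
qed

lemma pow_nat_coset:
  assumes L: "is_lattice L"
  shows "coset L a [^]\<^bsub>QG L\<^esub> (k::nat) = coset L (\<lambda>j. int k * a j)"
proof (induction k)
  case 0
  then show ?case by (simp add: QG_one coset_0[OF L])
next
  case (Suc k)
  then show ?case by (simp add: mult_coset[OF L] algebra_simps)
qed

lemma pow_int_coset:
  assumes L: "is_lattice L"
  shows "coset L a [^]\<^bsub>QG L\<^esub> (k::int) = coset L (\<lambda>j. k * a j)"
proof (cases "k < 0")
  case True
  interpret comm_group "QG L" by (rule QG_group[OF L])
  have "inv\<^bsub>QG L\<^esub> (coset L (\<lambda>j. int (nat (-k)) * a j)) = coset L (\<lambda>j. k * a j)"
  proof (rule inv_equality)
    have "coset L (\<lambda>j. k * a j) \<otimes>\<^bsub>QG L\<^esub> coset L (\<lambda>j. int (nat (-k)) * a j) = coset L (\<lambda>_. 0)"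
      using True by (simp add: mult_coset[OF L] algebra_simps)
    then show "coset L (\<lambda>j. k * a j) \<otimes>\<^bsub>QG L\<^esub> coset L (\<lambda>j. int (nat (-k)) * a j) = \<one>\<^bsub>QG L\<^esub>"
      by (simp add: QG_one coset_0[OF L])
  qed (auto simp: QG_carrier)
  then show ?thesis using True by (simp add: int_pow_def2 pow_nat_coset[OF L])
next
  case False
  then show ?thesis by (simp add: int_pow_def2 pow_nat_coset[OF L])
qed

lemma prod_basis:
  assumes L: "is_lattice L"
  shows "finprod (QG L) (\<lambda>i. coset L (\<lambda>j. if i = j then 1 else 0) [^]\<^bsub>QG L\<^esub> (x i :: int)) UNIV
         = coset L (x :: 'q::finite \<Rightarrow> int)"
proof -
  have "finprod (QG L) (\<lambda>i. coset L (\<lambda>j. if i = j then 1 else 0) [^]\<^bsub>QG L\<^esub> (x i :: int)) UNIV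
      = finprod (QG L) (\<lambda>i. coset L (\<lambda>j. x i * (if i = j then 1 else 0))) UNIV"
    by (simp add: pow_int_coset[OF L])
  also have "\<dots> = coset L (\<lambda>j. \<Sum>i\<in>UNIV. x i * (if i = j then 1 else 0))"
    by (rule finprod_coset[OF L]) simp
  also have "(\<lambda>j. \<Sum>i\<in>UNIV. x i * (if i = j then 1 else 0)) = x"
    by (simp add: fun_eq_iff if_distrib cong: if_cong)
  finally show ?thesis .
qed

lemma prod_basis_nat:
  assumes L: "is_lattice L"
  shows "finprod (QG L) (\<lambda>i. coset L (\<lambda>j. if i = j then 1 else 0) [^]\<^bsub>QG L\<^esub> (m i :: nat)) UNIV
         = coset L (\<lambda>j. int ((m :: 'q::finite \<Rightarrow> nat) j))"
proof -
  have "finprod (QG L) (\<lambda>i. coset L (\<lambda>j. if i = j then 1 else 0) [^]\<^bsub>QG L\<^esub> (m i :: nat)) UNIV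
     = finprod (QG L) (\<lambda>i. coset L (\<lambda>j. if i = j then 1 else 0) [^]\<^bsub>QG L\<^esub> (int (m i))) UNIV"
    by (simp add: pow_int_coset[OF L] pow_nat_coset[OF L])
  also have "\<dots> = coset L (\<lambda>j. int (m j :: nat))" by (rule prod_basis[OF L])
  finally show ?thesis .
qed

theorem mainTheorem14:
  fixes L :: "('q::finite \<Rightarrow> int) set" and t :: "'q \<Rightarrow> int" and n h :: nat
    and C :: "('q \<Rightarrow> int) set"
  assumes "is_lattice L" and "L \<subseteq> A_root"
    and "(\<Sum>i\<in>UNIV. t i) = int n" and "\<forall>i. t i \<ge> int h"
    and "C = coset L t \<inter> simplex n"
    and "multiset_code n C"
    and "min_dist C > real h"
  shows "\<exists>(G :: ('q \<Rightarrow> int) set monoid) (b :: 'q \<Rightarrow> ('q \<Rightarrow> int) set) b0.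
           comm_group G \<and> Bh_set G h b \<and> b0 \<in> carrier G \<and>
           C = {x \<in> simplex n. finprod G (\<lambda>i. b i [^]\<^bsub>G\<^esub> x i) UNIV = b0}"
proof -
  note L = assms(1)
  define b :: "'q \<Rightarrow> ('q \<Rightarrow> int) set" where "b = (\<lambda>i. coset L (\<lambda>j. if i = j then 1 else 0))"
  have fin: "finite C" using assms(6) unfolding multiset_code_def
    by (metis card.infinite not_numeral_le_zero)
  have tC: "t \<in> C"
  proof -
    have "(\<lambda>i. t i - t i) \<in> L" using lat_0[OF L] by simp
    then have "t \<in> coset L t" by (rule coset_mem[OF L, THEN iffD2])
    moreover have "t \<in> simplex n"
    proof -
      have "\<forall>i. t i \<ge> 0" using assms(4) by (meson of_nat_0_le_iff order_trans)
      then show ?thesis using assms(3) unfolding simplex_def by blast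
    qed
    ultimately show ?thesis using assms(5) by blast
  qed
  have Bh: "Bh_set (QG L) h b"
    unfolding Bh_set_def
  proof (intro conjI allI impI)
    fix i show "b i \<in> carrier (QG L)" by (simp add: b_def QG_carrier)
  next
    fix m m' :: "'q \<Rightarrow> nat"
    assume sm: "(\<Sum>i\<in>UNIV. m i) = h" and sm': "(\<Sum>i\<in>UNIV. m' i) = h"
      and eq: "finprod (QG L) (\<lambda>i. b i [^]\<^bsub>QG L\<^esub> m i) UNIV = finprod (QG L) (\<lambda>i. b i [^]\<^bsub>QG L\<^esub> m' i) UNIV"
    from eq have "coset L (\<lambda>j. int (m j)) = coset L (\<lambda>j. int (m' j))"
      unfolding b_def prod_basis_nat[OF L] .
    then have uL: "(\<lambda>j. int (m j) - int (m' j)) \<in> L" by (rule coset_eq[OF L, THEN iffD1])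
    define y where "y = (\<lambda>j. t j + (int (m j) - int (m' j)))"
    show "m = m'"
    proof (rule ccontr)
      assume ne: "m \<noteq> m'"
      have le': "m' j \<le> h" for j using sm' member_le_sum[of j UNIV m'] by simp
      have "(\<lambda>j. y j - t j) \<in> L" using uL by (simp add: y_def)
      then have "y \<in> coset L t" by (rule coset_mem[OF L, THEN iffD2])
      moreover have "y \<in> simplex n"
      proof -
        have "\<forall>j. y j \<ge> 0"
        proof
          fix j have "t j \<ge> int h" "int (m' j) \<le> int h" using assms(4) le'[of j] by auto
          then show "y j \<ge> 0" by (simp add: y_def)
        qed
        moreover have "(\<Sum>j\<in>UNIV. int (m j) - int (m' j)) = 0"
          using uL assms(2) unfolding A_root_def by blast
        then have "(\<Sum>j\<in>UNIV. y j) = int n"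
          using assms(3) by (simp add: y_def sum.distrib)
        ultimately show ?thesis unfolding simplex_def by blast
      qed
      ultimately have yC: "y \<in> C" using assms(5) by blast
      have "t \<noteq> y"
      proof
        assume "t = y"
        then have "\<forall>j. int (m j) - int (m' j) = 0" by (metis add_cancel_left_right y_def)
        then show False using ne by (auto simp: fun_eq_iff)
      qed
      have "d1 t y \<le> real h"
      proof -
        have "(\<Sum>i\<in>UNIV. real_of_int \<bar>t i - y i\<bar>) \<le> (\<Sum>i\<in>UNIV. real (m i) + real (m' i))"
          by (rule sum_mono) (simp add: y_def)
        also have "\<dots> = 2 * real h" using sm sm' by (simp add: sum.distrib flip: of_nat_sum)
        finally show ?thesis unfolding d1_def by simp
      qed
      moreover have "min_dist C \<le> d1 t y"
      proof -
        have "{d1 x y | x y. x \<in> C \<and> y \<in> C \<and> x \<noteq> y} \<subseteq> (\<lambda>(x, y). d1 x y) ` (C \<times> C)"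
          by auto
        then have "finite {d1 x y | x y. x \<in> C \<and> y \<in> C \<and> x \<noteq> y}"
          using fin by (meson finite_SigmaI finite_imageI finite_subset)
        moreover have "d1 t y \<in> {d1 x y | x y. x \<in> C \<and> y \<in> C \<and> x \<noteq> y}"
          using tC yC \<open>t \<noteq> y\<close> by blast
        ultimately show ?thesis unfolding min_dist_def by (rule Min_le)
      qed
      ultimately show False using assms(7) by linarith
    qed
  qed
  have Ceq: "C = {x \<in> simplex n. finprod (QG L) (\<lambda>i. b i [^]\<^bsub>QG L\<^esub> x i) UNIV = coset L t}"
  proof -
    have "x \<in> coset L t \<longleftrightarrow> finprod (QG L) (\<lambda>i. b i [^]\<^bsub>QG L\<^esub> x i) UNIV = coset L t" for x
      unfolding b_def prod_basis[OF L] by (simp only: coset_mem[OF L] coset_eq[OF L])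
    then show ?thesis using assms(5) by blast
  qed
  show ?thesis
    using QG_group[OF L] Bh Ceq
    by (intro exI[of _ "QG L"] exI[of _ b] exI[of _ "coset L t"]) (simp add: QG_carrier)
qed

end
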